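(* Let $f:X\to Y$ be a morphism of $\mathbf{OMLatGal}$. For $b\in Y$, the inverse image of the kernel $b:\downarrow b\to Y$ is $f^{-1}(\downarrow b\to Y)=(\downarrow f^*(b^\perp)\to X)$. For $a\in X$, the direct image of the kernel $a:\downarrow a\to X$ is $\exists_f(\downarrow a\to X)=(\downarrow(f_*(a)^\perp)\to Y)$.
   Context: An orthomodular lattice is a bounded lattice with an order-reversing involution $x\mapsto x^\perp$ such that $x\wedge x^\perp=0$, $x\vee x^\perp=1$, and $x\le y$ implies $y=x\vee(x^\perp\wedge y)$. The category $\mathbf{OMLatGal}$ has orthomodular lattices as objects; a morphism $f:X\to Y$ is a pair $(f_*,f^* )$ of order-reversing functions $f_*:X\to Y$, $f^*:Y\to X$ such that $y\le f_*(x)$ iff $x\le f^*(y)$ for all $x\in X,y\in Y$. The identity on $X$ is the pair whose both components are $x\mapsto x^\perp$. Composition: $(g\circ f)_*=g_*\circ(-)^\perp\circ f_*$, $(g\circ f)^*=f^*\circ(-)^\perp\circ g^*$. Dagger: $(f_*,f^* )^\dagger=(f^*,f_* )$. It is a dagger kernel category (zero object the one-element lattice); for $a\in X$, $\downarrow a=\{u\le a\}$ with complement $u^{\perp_a}=a\wedge u^\perp$, and the downset morphism $a:\downarrow a\to X$ ($a_*(u)=u^\perp$, $a^*(x)=a\wedge x^\perp$) is a dagger kernel. In a dagger kernel category, $\mathrm{coker}(f)=\ker(f^\dagger)^\dagger$; for a kernel $n$ into $Y$, $f^{-1}(n)=\ker(\mathrm{coker}(n)\circ f)$ (the pullback of $n$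 along $f$); for a kernel $m$ into $X$, $\exists_f(m)=\ker(\mathrm{coker}(f\circ m))$ (the image of $f\circ m$). Kernels are identified up to isomorphism over their codomain. *)

theory Defs
  imports Main
begin

record 'a oml =
  carrier :: "'a set"
  le :: "'a \<Rightarrow> 'a \<Rightarrow> bool"
  compl :: "'a \<Rightarrow> 'a"

definition is_glb :: "'a oml \<Rightarrow> 'a \<Rightarrow> 'a \<Rightarrow> 'a \<Rightarrow> bool" where
  "is_glb X x y m \<longleftrightarrow> m \<in> carrier X \<and> le X m x \<and> le X m y \<and>
     (\<forall>z\<in>carrier X. le X z x \<and> le X z y \<longrightarrow> le X z m)"

definition is_lub :: "'a oml \<Rightarrow> 'a \<Rightarrow> 'a \<Rightarrow> 'a \<Rightarrow> bool" where
  "is_lub X x y m \<longleftrightarrow> m \<in> carrier X \<and> le X x m \<and> le X y m \<and>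
     (\<forall>z\<in>carrier X. le X x z \<and> le X y z \<longrightarrow> le X m z)"

definition meet :: "'a oml \<Rightarrow> 'a \<Rightarrow> 'a \<Rightarrow> 'a" where
  "meet X x y = (THE m. is_glb X x y m)"

definition join :: "'a oml \<Rightarrow> 'a \<Rightarrow> 'a \<Rightarrow> 'a" where
  "join X x y = (THE m. is_lub X x y m)"

definition is_bot :: "'a oml \<Rightarrow> 'a \<Rightarrow> bool" where
  "is_bot X b \<longleftrightarrow> b \<in> carrier X \<and> (\<forall>x\<in>carrier X. le X b x)"

definition is_top :: "'a oml \<Rightarrow> 'a \<Rightarrow> bool" where
  "is_top X t \<longleftrightarrow> t \<in> carrier X \<and> (\<forall>x\<in>carrier X. le X x t)"

definition bot :: "'a oml \<Rightarrow> 'a" where "bot X = (THE b. is_bot X b)"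
definition top :: "'a oml \<Rightarrow> 'a" where "top X = (THE t. is_top X t)"

definition is_oml :: "'a oml \<Rightarrow> bool" where
  "is_oml X \<longleftrightarrow>
     (\<forall>x\<in>carrier X. le X x x) \<and>
     (\<forall>x\<in>carrier X. \<forall>y\<in>carrier X. le X x y \<and> le X y x \<longrightarrow> x = y) \<and>
     (\<forall>x\<in>carrier X. \<forall>y\<in>carrier X. \<forall>z\<in>carrier X. le X x y \<and> le X y z \<longrightarrow> le X x z) \<and>
     (\<forall>x\<in>carrier X. \<forall>y\<in>carrier X. \<exists>m. is_glb X x y m) \<and>
     (\<forall>x\<in>carrier X. \<forall>y\<in>carrier X. \<exists>m. is_lub X x y m) \<and>
     (\<exists>b. is_bot X b) \<and> (\<exists>t. is_top X t) \<and>
     (\<forall>x\<in>carrier X. compl X x \<in> carrier X) \<and>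
     (\<forall>x\<in>carrier X. compl X (compl X x) = x) \<and>
     (\<forall>x\<in>carrier X. \<forall>y\<in>carrier X. le X x y \<longrightarrow> le X (compl X y) (compl X x)) \<and>
     (\<forall>x\<in>carrier X. meet X x (compl X x) = bot X) \<and>
     (\<forall>x\<in>carrier X. join X x (compl X x) = top X) \<and>
     (\<forall>x\<in>carrier X. \<forall>y\<in>carrier X. le X x y \<longrightarrow> y = join X x (meet X (compl X x) y))"

text \<open>A morphism f : X -> Y is a pair (f_*, f^*) = (fst f, snd f).\<close>
type_synonym ('a, 'b) mor = "('a \<Rightarrow> 'b) \<times> ('b \<Rightarrow> 'a)"

definition is_mor :: "'a oml \<Rightarrow> 'b oml \<Rightarrow> ('a, 'b) mor \<Rightarrow> bool" where
  "is_mor X Y f \<longleftrightarrow>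
     (\<forall>x\<in>carrier X. fst f x \<in> carrier Y) \<and>
     (\<forall>y\<in>carrier Y. snd f y \<in> carrier X) \<and>
     (\<forall>x\<in>carrier X. \<forall>x'\<in>carrier X. le X x x' \<longrightarrow> le Y (fst f x') (fst f x)) \<and>
     (\<forall>y\<in>carrier Y. \<forall>y'\<in>carrier Y. le Y y y' \<longrightarrow> le X (snd f y') (snd f y)) \<and>
     (\<forall>x\<in>carrier X. \<forall>y\<in>carrier Y. le Y y (fst f x) \<longleftrightarrow> le X x (snd f y))"

definition mor_eq :: "'a oml \<Rightarrow> 'b oml \<Rightarrow> ('a, 'b) mor \<Rightarrow> ('a, 'b) mor \<Rightarrow> bool" where
  "mor_eq X Y f g \<longleftrightarrow> (\<forall>x\<in>carrier X. fst f x = fst g x) \<and> (\<forall>y\<in>carrier Y. snd f y = snd g y)"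

definition comp :: "'b oml \<Rightarrow> ('b, 'c) mor \<Rightarrow> ('a, 'b) mor \<Rightarrow> ('a, 'c) mor" where
  "comp B g f = (fst g \<circ> compl B \<circ> fst f, snd f \<circ> compl B \<circ> snd g)"

definition dagger :: "('a, 'b) mor \<Rightarrow> ('b, 'a) mor" where
  "dagger f = (snd f, fst f)"

definition zero_oml :: "unit oml" where
  "zero_oml = \<lparr>carrier = {()}, le = (\<lambda>_ _. True), compl = (\<lambda>u. u)\<rparr>"

definition to_zero :: "'a oml \<Rightarrow> ('a, unit) mor" where
  "to_zero X = ((\<lambda>_. ()), (\<lambda>_. top X))"

definition from_zero :: "'b oml \<Rightarrow> (unit, 'b) mor" where
  "from_zero Y = ((\<lambda>_. top Y), (\<lambda>_. ()))"

definition zero_mor :: "'a oml \<Rightarrow> 'b oml \<Rightarrow> ('a, 'b) mor" where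
  "zero_mor X Y = comp zero_oml (from_zero Y) (to_zero X)"

definition downset :: "'a oml \<Rightarrow> 'a \<Rightarrow> 'a oml" where
  "downset X a = \<lparr>carrier = {u \<in> carrier X. le X u a}, le = le X,
                  compl = (\<lambda>u. meet X a (compl X u))\<rparr>"

definition downmor :: "'a oml \<Rightarrow> 'a \<Rightarrow> ('a, 'a) mor" where
  "downmor X a = (compl X, (\<lambda>x. meet X a (compl X x)))"

text \<open>k : K -> X is a kernel of g : X -> Y. The universal property is tested against
  all objects whose carrier lives in the type 'z (given by the phantom argument).\<close>
definition is_kernel :: "'z itself \<Rightarrow> 'k oml \<Rightarrow> 'a oml \<Rightarrow> 'b oml \<Rightarrow> ('k, 'a) mor \<Rightarrow> ('a, 'b) mor \<Rightarrow> bool" where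
  "is_kernel T K X Y k g \<longleftrightarrow>
     is_oml K \<and> is_mor K X k \<and> mor_eq K Y (comp X g k) (zero_mor K Y) \<and>
     (\<forall>(Z::'z oml) h. is_oml Z \<and> is_mor Z X h \<and> mor_eq Z Y (comp X g h) (zero_mor Z Y) \<longrightarrow>
        (\<exists>u. is_mor Z K u \<and> mor_eq Z X (comp K k u) h \<and>
             (\<forall>u'. is_mor Z K u' \<and> mor_eq Z X (comp K k u') h \<longrightarrow> mor_eq Z K u' u)))"

end

theory Submission
  imports Defs
begin


lemma meet_eq_gen:
  assumes "\<And>x y. x \<in> carrier Y \<Longrightarrow> y \<in> carrier Y \<Longrightarrow> le Y x y \<Longrightarrow> le Y y x \<Longrightarrow> x = y"
    and "is_glb Y x y m"
  shows "meet Y x y = m"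
  unfolding meet_def
proof (rule the_equality)
  show "is_glb Y x y m" by (rule assms(2))
next
  fix m' assume "is_glb Y x y m'"
  with assms(2) show "m' = m" unfolding is_glb_def by (metis assms(1))
qed

lemma join_eq_gen:
  assumes "\<And>x y. x \<in> carrier Y \<Longrightarrow> y \<in> carrier Y \<Longrightarrow> le Y x y \<Longrightarrow> le Y y x \<Longrightarrow> x = y"
    and "is_lub Y x y m"
  shows "join Y x y = m"
  unfolding join_def
proof (rule the_equality)
  show "is_lub Y x y m" by (rule assms(2))
next
  fix m' assume "is_lub Y x y m'"
  with assms(2) show "m' = m" unfolding is_lub_def by (metis assms(1))
qed

lemma top_eq_gen:
  assumes "\<And>x y. x \<in> carrier Y \<Longrightarrow> y \<in> carrier Y \<Longrightarrow> le Y x y \<Longrightarrow> le Y y x \<Longrightarrow> x = y"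
    and "is_top Y t"
  shows "top Y = t"
  unfolding top_def
proof (rule the_equality)
  show "is_top Y t" by (rule assms(2))
next
  fix m' assume "is_top Y m'"
  with assms(2) show "m' = t" unfolding is_top_def by (metis assms(1))
qed

lemma bot_eq_gen:
  assumes "\<And>x y. x \<in> carrier Y \<Longrightarrow> y \<in> carrier Y \<Longrightarrow> le Y x y \<Longrightarrow> le Y y x \<Longrightarrow> x = y"
    and "is_bot Y t"
  shows "bot Y = t"
  unfolding bot_def
proof (rule the_equality)
  show "is_bot Y t" by (rule assms(2))
next
  fix m' assume "is_bot Y m'"
  with assms(2) show "m' = t" unfolding is_bot_def by (metis assms(1))
qed

locale OM =
  fixes X :: "'a oml"
  assumes oml: "is_oml X"
begin

lemma om_refl: "x \<in> carrier X \<Longrightarrow> le X x x" using oml unfolding is_oml_def by blast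
lemma om_antisym: "x \<in> carrier X \<Longrightarrow> y \<in> carrier X \<Longrightarrow> le X x y \<Longrightarrow> le X y x \<Longrightarrow> x = y"
  using oml unfolding is_oml_def by blast
lemma om_trans: "x \<in> carrier X \<Longrightarrow> y \<in> carrier X \<Longrightarrow> z \<in> carrier X \<Longrightarrow> le X x y \<Longrightarrow> le X y z \<Longrightarrow> le X x z"
  using oml unfolding is_oml_def by blast
lemma cc: "x \<in> carrier X \<Longrightarrow> compl X x \<in> carrier X" using oml unfolding is_oml_def by blast
lemma ccompl: "x \<in> carrier X \<Longrightarrow> compl X (compl X x) = x" using oml unfolding is_oml_def by blast
lemma canti: "x \<in> carrier X \<Longrightarrow> y \<in> carrier X \<Longrightarrow> le X x y \<Longrightarrow> le X (compl X y) (compl X x)"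
  using oml unfolding is_oml_def by blast
lemma om_law: "x \<in> carrier X \<Longrightarrow> y \<in> carrier X \<Longrightarrow> le X x y \<Longrightarrow> y = join X x (meet X (compl X x) y)"
  using oml unfolding is_oml_def by blast

lemma meet_glb: assumes "x \<in> carrier X" "y \<in> carrier X" shows "is_glb X x y (meet X x y)"
proof -
  have "\<forall>x\<in>carrier X. \<forall>y\<in>carrier X. \<exists>m. is_glb X x y m" using oml unfolding is_oml_def by (elim conjE) assumption
  then obtain m where m: "is_glb X x y m" using assms by blast
  have "meet X x y = m" by (rule meet_eq_gen[OF om_antisym m])
  with m show ?thesis by simp
qed

lemma join_lub: assumes "x \<in> carrier X" "y \<in> carrier X" shows "is_lub X x y (join X x y)"
proof -
  have "\<forall>x\<in>carrier X. \<forall>y\<in>carrier X. \<exists>m. is_lub X x y m" using oml unfolding is_oml_def by (elim conjE) assumption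
  then obtain m where m: "is_lub X x y m" using assms by blast
  have "join X x y = m" by (rule join_eq_gen[OF om_antisym m])
  with m show ?thesis by simp
qed

lemma top_is: "is_top X (top X)"
proof -
  have "\<exists>t. is_top X t" using oml unfolding is_oml_def by (elim conjE) assumption
  then obtain m where m: "is_top X m" by blast
  have "top X = m" by (rule top_eq_gen[OF om_antisym m])
  with m show ?thesis by simp
qed

lemma bot_is: "is_bot X (bot X)"
proof -
  have "\<exists>t. is_bot X t" using oml unfolding is_oml_def by (elim conjE) assumption
  then obtain m where m: "is_bot X m" by blast
  have "bot X = m" by (rule bot_eq_gen[OF om_antisym m])
  with m show ?thesis by simp
qed

lemma top_closed: "top X \<in> carrier X" using top_is unfolding is_top_def by blast
lemma le_top: "x \<in> carrier X \<Longrightarrow> le X x (top X)" using top_is unfolding is_top_def by blast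
lemma top_eqI: "t \<in> carrier X \<Longrightarrow> (\<And>x. x \<in> carrier X \<Longrightarrow> le X x t) \<Longrightarrow> top X = t"
  by (rule top_eq_gen[OF om_antisym]) (auto simp: is_top_def)
lemma bot_closed: "bot X \<in> carrier X" using bot_is unfolding is_bot_def by blast
lemma bot_le: "x \<in> carrier X \<Longrightarrow> le X (bot X) x" using bot_is unfolding is_bot_def by blast

lemma meet_closed: "x \<in> carrier X \<Longrightarrow> y \<in> carrier X \<Longrightarrow> meet X x y \<in> carrier X"
  using meet_glb unfolding is_glb_def by blast
lemma meet_le1: "x \<in> carrier X \<Longrightarrow> y \<in> carrier X \<Longrightarrow> le X (meet X x y) x"
  using meet_glb unfolding is_glb_def by blast
lemma meet_le2: "x \<in> carrier X \<Longrightarrow> y \<in> carrier X \<Longrightarrow> le X (meet X x y) y"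
  using meet_glb unfolding is_glb_def by blast
lemma meet_greatest: "x \<in> carrier X \<Longrightarrow> y \<in> carrier X \<Longrightarrow> z \<in> carrier X \<Longrightarrow> le X z x \<Longrightarrow> le X z y \<Longrightarrow> le X z (meet X x y)"
  using meet_glb unfolding is_glb_def by blast
lemma meet_eqI: "is_glb X x y m \<Longrightarrow> meet X x y = m"
  by (rule meet_eq_gen[OF om_antisym])
lemma join_closed: "x \<in> carrier X \<Longrightarrow> y \<in> carrier X \<Longrightarrow> join X x y \<in> carrier X"
  using join_lub unfolding is_lub_def by blast
lemma join_ge1: "x \<in> carrier X \<Longrightarrow> y \<in> carrier X \<Longrightarrow> le X x (join X x y)"
  using join_lub unfolding is_lub_def by blast
lemma join_ge2: "x \<in> carrier X \<Longrightarrow> y \<in> carrier X \<Longrightarrow> le X y (join X x y)"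
  using join_lub unfolding is_lub_def by blast
lemma join_least: "x \<in> carrier X \<Longrightarrow> y \<in> carrier X \<Longrightarrow> z \<in> carrier X \<Longrightarrow> le X x z \<Longrightarrow> le X y z \<Longrightarrow> le X (join X x y) z"
  using join_lub unfolding is_lub_def by blast

lemma meet_absorb1: "x \<in> carrier X \<Longrightarrow> y \<in> carrier X \<Longrightarrow> le X x y \<Longrightarrow> meet X x y = x"
  by (rule meet_eqI) (auto simp: is_glb_def om_refl)
lemma meet_absorb2: "x \<in> carrier X \<Longrightarrow> y \<in> carrier X \<Longrightarrow> le X y x \<Longrightarrow> meet X x y = y"
  by (rule meet_eqI) (auto simp: is_glb_def om_refl)
lemma meet_comm: "x \<in> carrier X \<Longrightarrow> y \<in> carrier X \<Longrightarrow> meet X x y = meet X y x"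
  by (rule meet_eqI) (auto simp: is_glb_def meet_closed meet_le1 meet_le2 meet_greatest)
lemma meet_mono2: "a \<in> carrier X \<Longrightarrow> x \<in> carrier X \<Longrightarrow> y \<in> carrier X \<Longrightarrow> le X x y \<Longrightarrow> le X (meet X a x) (meet X a y)"
  by (meson meet_closed meet_greatest meet_le1 meet_le2 om_trans)

lemma compl_swap: "x \<in> carrier X \<Longrightarrow> y \<in> carrier X \<Longrightarrow> le X x (compl X y) \<Longrightarrow> le X y (compl X x)"
  by (metis canti cc ccompl)
lemma compl_swap2: "x \<in> carrier X \<Longrightarrow> y \<in> carrier X \<Longrightarrow> le X (compl X x) y \<Longrightarrow> le X (compl X y) x"
  by (metis canti cc ccompl)
lemma compl_le_iff: "x \<in> carrier X \<Longrightarrow> y \<in> carrier X \<Longrightarrow> le X (compl X x) (compl X y) \<longleftrightarrow> le X y x"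
  by (metis canti cc ccompl)

lemma demorgan: assumes "x \<in> carrier X" "y \<in> carrier X"
  shows "compl X (join X x y) = meet X (compl X x) (compl X y)"
proof -
  have "is_glb X (compl X x) (compl X y) (compl X (join X x y))"
  proof -
    have j: "join X x y \<in> carrier X" using assms by (rule join_closed)
    have g: "le X z (compl X (join X x y))"
      if z: "z \<in> carrier X" "le X z (compl X x)" "le X z (compl X y)" for z
    proof -
      have "le X x (compl X z)" using compl_swap[OF z(1) assms(1) z(2)] .
      moreover have "le X y (compl X z)" using compl_swap[OF z(1) assms(2) z(3)] .
      ultimately have "le X (join X x y) (compl X z)" using join_least assms cc z(1) by blast
      then show ?thesis using compl_swap j z(1) by blast
    qed
    show ?thesis unfolding is_glb_def
      using g j cc[OF j] canti[OF assms(1) j join_ge1[OF assms]] canti[OF assms(2) j join_ge2[OF assms]]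
      by blast
  qed
  then show ?thesis by (simp add: meet_eqI)
qed

lemma rel_inv: assumes "p \<in> carrier X" "u \<in> carrier X" "le X u p"
  shows "meet X p (compl X (meet X p (compl X u))) = u"
proof -
  have "compl X u = join X (compl X p) (meet X (compl X (compl X p)) (compl X u))"
    using assms by (intro om_law canti cc) auto
  then have "compl X u = join X (compl X p) (meet X p (compl X u))" using assms by (simp add: ccompl)
  then have "u = compl X (join X (compl X p) (meet X p (compl X u)))"
    using assms by (metis ccompl)
  also have "\<dots> = meet X p (compl X (meet X p (compl X u)))"
    using assms by (simp add: demorgan cc meet_closed ccompl)
  finally show ?thesis by simp
qed

lemma demorgan2: assumes "p \<in> carrier X" "x \<in> carrier X"
  shows "compl X (meet X p (compl X x)) = join X (compl X p) x"
proof -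
  have "compl X (join X (compl X p) x) = meet X p (compl X x)"
    using assms by (simp add: demorgan cc ccompl)
  then show ?thesis using assms by (metis ccompl join_closed cc)
qed

end



context OM
begin

lemma down_carrier[simp]: "carrier (downset X p) = {u \<in> carrier X. le X u p}"
  by (simp add: downset_def)
lemma down_le[simp]: "le (downset X p) = le X"
  by (simp add: downset_def)
lemma down_compl[simp]: "compl (downset X p) = (\<lambda>u. meet X p (compl X u))"
  by (simp add: downset_def)

lemma down_antisym: "x \<in> carrier (downset X p) \<Longrightarrow> y \<in> carrier (downset X p) \<Longrightarrow> le (downset X p) x y \<Longrightarrow> le (downset X p) y x \<Longrightarrow> x = y"
  using om_antisym by simp

lemma down_glb: assumes "p \<in> carrier X" "x \<in> carrier X" "y \<in> carrier X" "le X x p" "le X y p"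
  shows "is_glb (downset X p) x y (meet X x y)"
  using assms unfolding is_glb_def
  by (auto intro: meet_closed meet_le1 meet_le2 meet_greatest om_trans[of _ x p])

lemma down_lub: assumes "p \<in> carrier X" "x \<in> carrier X" "y \<in> carrier X" "le X x p" "le X y p"
  shows "is_lub (downset X p) x y (join X x y)"
  using assms unfolding is_lub_def
  by (auto intro: join_closed join_ge1 join_ge2 join_least)

lemma down_meet: assumes "p \<in> carrier X" "x \<in> carrier X" "y \<in> carrier X" "le X x p" "le X y p"
  shows "meet (downset X p) x y = meet X x y"
  by (rule meet_eq_gen[OF down_antisym down_glb[OF assms]])

lemma down_join: assumes "p \<in> carrier X" "x \<in> carrier X" "y \<in> carrier X" "le X x p" "le X y p"
  shows "join (downset X p) x y = join X x y"
  by (rule join_eq_gen[OF down_antisym down_lub[OF assms]])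

lemma down_top_is: "p \<in> carrier X \<Longrightarrow> is_top (downset X p) p"
  by (auto simp: is_top_def om_refl)
lemma down_top: "p \<in> carrier X \<Longrightarrow> top (downset X p) = p"
  by (rule top_eq_gen[OF down_antisym down_top_is])
lemma down_bot_is: "p \<in> carrier X \<Longrightarrow> is_bot (downset X p) (bot X)"
  by (auto simp: is_bot_def bot_le bot_closed)
lemma down_bot: "p \<in> carrier X \<Longrightarrow> bot (downset X p) = bot X"
  by (rule bot_eq_gen[OF down_antisym down_bot_is])

lemma meet_compl: "x \<in> carrier X \<Longrightarrow> meet X x (compl X x) = bot X"
  using oml unfolding is_oml_def by blast
lemma join_compl: "x \<in> carrier X \<Longrightarrow> join X x (compl X x) = top X"
  using oml unfolding is_oml_def by blast

lemma relc_closed: "p \<in> carrier X \<Longrightarrow> x \<in> carrier X \<Longrightarrow> meet X p (compl X x) \<in> carrier X"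
  by (simp add: cc meet_closed)
lemma relc_le: "p \<in> carrier X \<Longrightarrow> x \<in> carrier X \<Longrightarrow> le X (meet X p (compl X x)) p"
  by (simp add: cc meet_le1)

lemma downset_oml: assumes p: "p \<in> carrier X" shows "is_oml (downset X p)"
proof -
  have a11: "meet X u (meet X p (compl X u)) = bot X" if u: "u \<in> carrier X" "le X u p" for u
  proof -
    have m: "meet X u (meet X p (compl X u)) \<in> carrier X" using u p by (simp add: relc_closed meet_closed)
    have "le X (meet X u (meet X p (compl X u))) (meet X u (compl X u))"
      using u p m by (meson cc meet_greatest meet_le1 meet_le2 om_trans relc_closed)
    then have "le X (meet X u (meet X p (compl X u))) (bot X)" using u by (simp add: meet_compl)
    then show ?thesis using m by (simp add: bot_closed bot_le om_antisym)
  qed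
  have a12: "join X u (meet X p (compl X u)) = p" if u: "u \<in> carrier X" "le X u p" for u
    using om_law[of u p] u p by (simp add: meet_comm cc)
  have a13: "v = join X u (meet X (meet X p (compl X u)) v)"
    if u: "u \<in> carrier X" "le X u p" "v \<in> carrier X" "le X v p" "le X u v" for u v
  proof -
    have "is_glb X (meet X p (compl X u)) v (meet X (compl X u) v)"
      unfolding is_glb_def using u p
      by (auto intro!: meet_closed cc meet_greatest meet_le2 meet_le1
          intro: om_trans[of _ v p] om_trans[of _ "meet X p (compl X u)" "compl X u"] relc_closed)
    then have "meet X (meet X p (compl X u)) v = meet X (compl X u) v" by (simp add: meet_eqI)
    then show ?thesis using om_law[of u v] u by simp
  qed
  have a4: "\<forall>x\<in>carrier (downset X p). \<forall>y\<in>carrier (downset X p). \<exists>m. is_glb (downset X p) x y m"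
  proof (intro ballI)
    fix x y assume "x \<in> carrier (downset X p)" "y \<in> carrier (downset X p)"
    then have "is_glb (downset X p) x y (meet X x y)" using down_glb[OF p] by simp
    then show "\<exists>m. is_glb (downset X p) x y m" by (rule exI)
  qed
  have a5: "\<forall>x\<in>carrier (downset X p). \<forall>y\<in>carrier (downset X p). \<exists>m. is_lub (downset X p) x y m"
  proof (intro ballI)
    fix x y assume "x \<in> carrier (downset X p)" "y \<in> carrier (downset X p)"
    then have "is_lub (downset X p) x y (join X x y)" using down_lub[OF p] by simp
    then show "\<exists>m. is_lub (downset X p) x y m" by (rule exI)
  qed
  have a10: "\<forall>x\<in>carrier (downset X p). \<forall>y\<in>carrier (downset X p). le (downset X p) x y \<longrightarrow>
      le (downset X p) (compl (downset X p) y) (compl (downset X p) x)"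
  proof (intro ballI impI)
    fix x y assume "x \<in> carrier (downset X p)" "y \<in> carrier (downset X p)" "le (downset X p) x y"
    then show "le (downset X p) (compl (downset X p) y) (compl (downset X p) x)"
      using p by (simp add: meet_mono2 canti cc)
  qed
  have a13': "\<forall>x\<in>carrier (downset X p). \<forall>y\<in>carrier (downset X p). le (downset X p) x y \<longrightarrow>
      y = join (downset X p) x (meet (downset X p) (compl (downset X p) x) y)"
  proof (intro ballI impI)
    fix u v assume uv: "u \<in> carrier (downset X p)" "v \<in> carrier (downset X p)" "le (downset X p) u v"
    then have u: "u \<in> carrier X" "le X u p" and v: "v \<in> carrier X" "le X v p" and le: "le X u v" by auto
    let ?w = "meet X p (compl X u)"
    have w: "?w \<in> carrier X" "le X ?w p" using p u by (simp_all add: relc_closed relc_le)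
    have md: "meet (downset X p) ?w v = meet X ?w v" using down_meet[OF p w(1) v(1) w(2) v(2)] .
    have m: "meet X ?w v \<in> carrier X" "le X (meet X ?w v) p"
      using w v p by (auto intro: meet_closed om_trans[OF meet_closed[OF w(1) v(1)] w(1) p] meet_le1)
    have jd: "join (downset X p) u (meet X ?w v) = join X u (meet X ?w v)" using down_join[OF p u(1) m(1) u(2) m(2)] .
    show "v = join (downset X p) u (meet (downset X p) (compl (downset X p) u) v)"
      using a13[OF u v le] md jd by simp
  qed
  show ?thesis
    unfolding is_oml_def
    apply (intro conjI)
    subgoal by (simp add: om_refl)
    subgoal by (simp add: om_antisym)
    subgoal using om_trans by auto
    subgoal by (rule a4)
    subgoal by (rule a5)
    subgoal using down_bot_is p by blast
    subgoal using down_top_is p by blast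
    subgoal using p by (simp add: relc_closed relc_le)
    subgoal using p by (simp add: rel_inv)
    subgoal by (rule a10)
    subgoal using p by (simp add: down_meet relc_closed relc_le a11 down_bot)
    subgoal using p by (simp add: down_join relc_closed relc_le a12 down_top)
    subgoal by (rule a13')
    done
qed

end



lemma mor_fst: "is_mor X Y f \<Longrightarrow> x \<in> carrier X \<Longrightarrow> fst f x \<in> carrier Y"
  unfolding is_mor_def by blast
lemma mor_snd: "is_mor X Y f \<Longrightarrow> y \<in> carrier Y \<Longrightarrow> snd f y \<in> carrier X"
  unfolding is_mor_def by blast
lemma mor_gal: "is_mor X Y f \<Longrightarrow> x \<in> carrier X \<Longrightarrow> y \<in> carrier Y \<Longrightarrow> le Y y (fst f x) \<longleftrightarrow> le X x (snd f y)"
  unfolding is_mor_def by blast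
lemma mor_fst_anti: "is_mor X Y f \<Longrightarrow> x \<in> carrier X \<Longrightarrow> x' \<in> carrier X \<Longrightarrow> le X x x' \<Longrightarrow> le Y (fst f x') (fst f x)"
  unfolding is_mor_def by blast
lemma mor_snd_anti: "is_mor X Y f \<Longrightarrow> y \<in> carrier Y \<Longrightarrow> y' \<in> carrier Y \<Longrightarrow> le Y y y' \<Longrightarrow> le X (snd f y') (snd f y)"
  unfolding is_mor_def by blast

lemma is_mor_dagger: "is_mor X Y f \<Longrightarrow> is_mor Y X (dagger f)"
  unfolding is_mor_def dagger_def by auto

lemma is_mor_comp:
  assumes Y: "is_oml Y" and f: "is_mor X Y f" and g: "is_mor Y Z g"
  shows "is_mor X Z (comp Y g f)"
proof -
  interpret Y: OM Y by (rule OM.intro[OF Y])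
  have c1: "\<forall>x\<in>carrier X. fst (comp Y g f) x \<in> carrier Z"
    unfolding comp_def using f g by (simp add: mor_fst Y.cc)
  have c2: "\<forall>z\<in>carrier Z. snd (comp Y g f) z \<in> carrier X"
    unfolding comp_def using f g by (simp add: mor_snd Y.cc)
  have c3: "\<forall>x\<in>carrier X. \<forall>x'\<in>carrier X. le X x x' \<longrightarrow> le Z (fst (comp Y g f) x') (fst (comp Y g f) x)"
  proof (intro ballI impI)
    fix x x' assume x: "x \<in> carrier X" "x' \<in> carrier X" "le X x x'"
    have "le Y (fst f x') (fst f x)" using mor_fst_anti[OF f x] .
    then have "le Y (compl Y (fst f x)) (compl Y (fst f x'))" using Y.canti mor_fst[OF f] x by blast
    then have "le Z (fst g (compl Y (fst f x'))) (fst g (compl Y (fst f x)))"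
      using mor_fst_anti[OF g] Y.cc mor_fst[OF f] x by blast
    then show "le Z (fst (comp Y g f) x') (fst (comp Y g f) x)" by (simp add: comp_def)
  qed
  have c4: "\<forall>z\<in>carrier Z. \<forall>z'\<in>carrier Z. le Z z z' \<longrightarrow> le X (snd (comp Y g f) z') (snd (comp Y g f) z)"
  proof (intro ballI impI)
    fix x x' assume x: "x \<in> carrier Z" "x' \<in> carrier Z" "le Z x x'"
    have "le Y (snd g x') (snd g x)" using mor_snd_anti[OF g x] .
    then have "le Y (compl Y (snd g x)) (compl Y (snd g x'))" using Y.canti mor_snd[OF g] x by blast
    then have "le X (snd f (compl Y (snd g x'))) (snd f (compl Y (snd g x)))"
      using mor_snd_anti[OF f] Y.cc mor_snd[OF g] x by blast
    then show "le X (snd (comp Y g f) x') (snd (comp Y g f) x)" by (simp add: comp_def)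
  qed
  have c5: "\<forall>x\<in>carrier X. \<forall>z\<in>carrier Z. le Z z (fst (comp Y g f) x) \<longleftrightarrow> le X x (snd (comp Y g f) z)"
  proof (intro ballI)
    fix x z assume x: "x \<in> carrier X" and z: "z \<in> carrier Z"
    have fx: "fst f x \<in> carrier Y" using mor_fst[OF f x] .
    have gz: "snd g z \<in> carrier Y" using mor_snd[OF g z] .
    have "le Z z (fst g (compl Y (fst f x))) \<longleftrightarrow> le Y (compl Y (fst f x)) (snd g z)"
      using mor_gal[OF g Y.cc[OF fx] z] .
    also have "\<dots> \<longleftrightarrow> le Y (compl Y (snd g z)) (fst f x)"
      using Y.compl_swap2[OF fx gz] Y.compl_swap2[OF gz fx] by blast
    also have "\<dots> \<longleftrightarrow> le X x (snd f (compl Y (snd g z)))"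
      using mor_gal[OF f x Y.cc[OF gz]] .
    finally show "le Z z (fst (comp Y g f) x) \<longleftrightarrow> le X x (snd (comp Y g f) z)" by (simp add: comp_def)
  qed
  show ?thesis unfolding is_mor_def using c1 c2 c3 c4 c5 by blast
qed

lemma zero_mor_fst[simp]: "fst (zero_mor Z Y) = (\<lambda>_. top Y)"
  by (simp add: zero_mor_def comp_def from_zero_def to_zero_def o_def)
lemma zero_mor_snd[simp]: "snd (zero_mor Z Y) = (\<lambda>_. top Z)"
  by (simp add: zero_mor_def comp_def from_zero_def to_zero_def o_def)

lemma downmor_mor:
  assumes X: "is_oml X" and p: "p \<in> carrier X"
  shows "is_mor (downset X p) X (downmor X p)"
proof -
  interpret X: OM X by (rule OM.intro[OF X])
  have c5: "\<forall>u\<in>carrier (downset X p). \<forall>x\<in>carrier X.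
      le X x (fst (downmor X p) u) \<longleftrightarrow> le (downset X p) u (snd (downmor X p) x)"
  proof (intro ballI)
    fix u x assume u: "u \<in> carrier (downset X p)" and x: "x \<in> carrier X"
    then have u1: "u \<in> carrier X" "le X u p" by auto
    have "le X x (compl X u) \<longleftrightarrow> le X u (compl X x)"
      using X.compl_swap[OF x u1(1)] X.compl_swap[OF u1(1) x] by blast
    also have "\<dots> \<longleftrightarrow> le X u (meet X p (compl X x))"
      using X.meet_greatest[OF p X.cc[OF x] u1(1) u1(2)] X.meet_le2[OF p X.cc[OF x]]
        X.om_trans[OF u1(1) X.meet_closed[OF p X.cc[OF x]] X.cc[OF x]] by blast
    finally show "le X x (fst (downmor X p) u) \<longleftrightarrow> le (downset X p) u (snd (downmor X p) x)"
      by (simp add: downmor_def)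
  qed
  have c1: "\<forall>u\<in>carrier (downset X p). fst (downmor X p) u \<in> carrier X"
    by (simp add: downmor_def X.cc)
  have c2: "\<forall>x\<in>carrier X. snd (downmor X p) x \<in> carrier (downset X p)"
    using p by (simp add: downmor_def X.relc_closed X.relc_le)
  have c3: "\<forall>u\<in>carrier (downset X p). \<forall>u'\<in>carrier (downset X p). le (downset X p) u u' \<longrightarrow>
      le X (fst (downmor X p) u') (fst (downmor X p) u)"
    by (simp add: downmor_def X.canti)
  have c4: "\<forall>x\<in>carrier X. \<forall>x'\<in>carrier X. le X x x' \<longrightarrow>
      le (downset X p) (snd (downmor X p) x') (snd (downmor X p) x)"
    using p by (simp add: downmor_def X.canti X.meet_mono2 X.cc)
  show ?thesis unfolding is_mor_def using c1 c2 c3 c4 c5 by blast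
qed



lemma yoneda_eq:
  assumes Z: "is_oml Z" and a: "a \<in> carrier Z" and b: "b \<in> carrier Z"
    and h: "\<And>z. z \<in> carrier Z \<Longrightarrow> le Z z a \<longleftrightarrow> le Z z b"
  shows "a = b"
proof -
  interpret Z: OM Z by (rule OM.intro[OF Z])
  show ?thesis using h a b by (meson Z.om_antisym Z.om_refl)
qed

lemma kernel_downmor:
  assumes X: "is_oml X" and K: "is_oml K" and G: "is_mor X K G" and p: "p \<in> carrier X"
    and key: "\<And>x. x \<in> carrier X \<Longrightarrow> fst G x = top K \<longleftrightarrow> le X x p"
  shows "is_kernel T (downset X p) X K (downmor X p) G"
proof -
  interpret X: OM X by (rule OM.intro[OF X])
  interpret K: OM K by (rule OM.intro[OF K])
  have m1: "mor_eq (downset X p) K (comp X G (downmor X p)) (zero_mor (downset X p) K)"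
  proof -
    have "fst G u = top K" if "u \<in> carrier X" "le X u p" for u using key that by blast
    moreover have "meet X p (snd G k) = p" if k: "k \<in> carrier K" for k
    proof -
      have "le K k (fst G p)" using key[OF p] k by (simp add: X.om_refl p K.le_top)
      then have "le X p (snd G k)" using mor_gal[OF G p k] by simp
      then show ?thesis using p k by (simp add: X.meet_absorb1 mor_snd[OF G])
    qed
    ultimately show ?thesis
      unfolding mor_eq_def comp_def downmor_def using p
      by (simp add: X.ccompl mor_snd[OF G] X.down_top)
  qed
  have univ: "\<exists>u. is_mor Z (downset X p) u \<and> mor_eq Z X (comp (downset X p) (downmor X p) u) h \<and>
             (\<forall>u'. is_mor Z (downset X p) u' \<and> mor_eq Z X (comp (downset X p) (downmor X p) u') h \<longrightarrow>
                mor_eq Z (downset X p) u' u)"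
    if Z: "is_oml Z" and h: "is_mor Z X h" and hz: "mor_eq Z K (comp X G h) (zero_mor Z K)"
    for Z :: "'z oml" and h
  proof -
    interpret Z: OM Z by (rule OM.intro[OF Z])
    have hs: "\<And>z. z \<in> carrier Z \<Longrightarrow> fst h z \<in> carrier X" using mor_fst[OF h] .
    have hs2: "\<And>x. x \<in> carrier X \<Longrightarrow> snd h x \<in> carrier Z" using mor_snd[OF h] .
    have lep: "le X (compl X (fst h z)) p" if z: "z \<in> carrier Z" for z
    proof -
      have "fst G (compl X (fst h z)) = top K" using hz z unfolding mor_eq_def comp_def by simp
      then show ?thesis using key hs[OF z] X.cc by blast
    qed
    have lep2: "le X (compl X p) (fst h z)" if z: "z \<in> carrier Z" for z
      using lep[OF z] by (meson X.cc X.compl_swap2 hs p z)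
    define u where "u = ((\<lambda>z. meet X p (fst h z)), snd h)"
    have umor: "is_mor Z (downset X p) u"
      unfolding is_mor_def u_def using p
      apply (intro conjI ballI impI)
      apply (simp_all add: X.meet_closed X.meet_le1 hs hs2 mor_snd_anti[OF h])
      apply (simp add: X.meet_mono2 hs mor_fst_anti[OF h])
      by (meson X.meet_greatest X.meet_le2 X.meet_closed X.om_trans hs mor_gal[OF h])
    have hj: "snd h (join X (compl X p) w) = snd h w" if w: "w \<in> carrier X" for w
    proof (rule yoneda_eq[OF Z])
      show "snd h (join X (compl X p) w) \<in> carrier Z" using w p by (simp add: hs2 X.join_closed X.cc)
      show "snd h w \<in> carrier Z" using w by (simp add: hs2)
      fix z assume z: "z \<in> carrier Z"
      have "le Z z (snd h (join X (compl X p) w)) \<longleftrightarrow> le X (join X (compl X p) w) (fst h z)"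
        using mor_gal[OF h z] w p by (simp add: X.join_closed X.cc)
      also have "\<dots> \<longleftrightarrow> le X w (fst h z)"
        using w p z lep2[OF z]
        by (meson X.cc X.join_closed X.join_ge2 X.join_least X.om_trans hs)
      also have "\<dots> \<longleftrightarrow> le Z z (snd h w)" using mor_gal[OF h z w] .
      finally show "le Z z (snd h (join X (compl X p) w)) \<longleftrightarrow> le Z z (snd h w)" .
    qed
    have ueq: "mor_eq Z X (comp (downset X p) (downmor X p) u) h"
    proof -
      have "compl X (meet X p (compl X (meet X p (fst h z)))) = fst h z" if z: "z \<in> carrier Z" for z
      proof -
        have "meet X p (fst h z) = meet X p (compl X (compl X (fst h z)))" using z by (simp add: X.ccompl hs)
        then have "meet X p (compl X (meet X p (fst h z))) = compl X (fst h z)"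
          using X.rel_inv[OF p X.cc[OF hs[OF z]] lep[OF z]] by simp
        then show ?thesis using z by (simp add: X.ccompl hs)
      qed
      moreover have "snd h (meet X p (compl X (meet X p (compl X x)))) = snd h x" if x: "x \<in> carrier X" for x
      proof -
        let ?x' = "meet X p (compl X (meet X p (compl X x)))"
        have x': "?x' = meet X p (join X (compl X p) x)" using x p by (simp add: X.demorgan2)
        have jc: "join X (compl X p) x \<in> carrier X" using x p by (simp add: X.join_closed X.cc)
        have "join X (compl X p) x = join X (compl X p) (meet X (compl X (compl X p)) (join X (compl X p) x))"
          using X.om_law[of "compl X p" "join X (compl X p) x"] x p
          by (simp add: X.cc X.join_closed X.join_ge1)
        then have "join X (compl X p) ?x' = join X (compl X p) x" using x' p by (simp add: X.ccompl)
        then have "snd h ?x' = snd h (join X (compl X p) x)"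
          using hj[of ?x'] x p by (simp add: X.meet_closed X.cc jc)
        then show ?thesis using hj[OF x] by simp
      qed
      ultimately show ?thesis
        unfolding mor_eq_def comp_def downmor_def u_def by simp
    qed
    have uniq: "mor_eq Z (downset X p) u' u"
      if u': "is_mor Z (downset X p) u'" and eq': "mor_eq Z X (comp (downset X p) (downmor X p) u') h" for u'
    proof -
      have f1: "fst u' z = meet X p (fst h z)" if z: "z \<in> carrier Z" for z
      proof -
        have uz: "fst u' z \<in> carrier X" "le X (fst u' z) p" using mor_fst[OF u' z] by auto
        have "compl X (meet X p (compl X (fst u' z))) = fst h z"
          using eq' z unfolding mor_eq_def comp_def downmor_def by simp
        then have "meet X p (compl X (fst u' z)) = compl X (fst h z)"
          using uz p by (metis X.ccompl X.relc_closed)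
        then show ?thesis using X.rel_inv[OF p uz] z by (simp add: X.ccompl hs)
      qed
      have f2: "snd u' y = snd h y" if y: "y \<in> carrier X" "le X y p" for y
      proof -
        have "snd u' (meet X p (compl X (meet X p (compl X y)))) = snd h y"
          using eq' y unfolding mor_eq_def comp_def downmor_def by simp
        then show ?thesis using X.rel_inv[OF p y] by simp
      qed
      show ?thesis unfolding mor_eq_def u_def using f1 f2 by simp
    qed
    show ?thesis using umor ueq uniq by blast
  qed
  show ?thesis
    unfolding is_kernel_def
    using X.downset_oml[OF p] downmor_mor[OF X p] m1 univ by blast
qed



lemma top_char:
  assumes K: "is_oml K" and c: "is_mor K Y c" and y: "y \<in> carrier Y"
  shows "snd c y = top K \<longleftrightarrow> (\<forall>k\<in>carrier K. le Y y (fst c k))"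
proof -
  interpret K: OM K by (rule OM.intro[OF K])
  show ?thesis
  proof
    assume "snd c y = top K"
    then show "\<forall>k\<in>carrier K. le Y y (fst c k)" using mor_gal[OF c _ y] K.le_top by simp
  next
    assume "\<forall>k\<in>carrier K. le Y y (fst c k)"
    then have "\<forall>k\<in>carrier K. le K k (snd c y)" using mor_gal[OF c _ y] by simp
    then show "snd c y = top K" using K.top_eqI mor_snd[OF c y] by metis
  qed
qed

lemma exists_k:
  fixes Y :: "'b oml"
  assumes ker: "is_kernel TYPE('b) K Y W c e" and Y: "is_oml Y" and r: "r \<in> carrier Y"
    and z: "mor_eq (downset Y r) W (comp Y e (downmor Y r)) (zero_mor (downset Y r) W)"
  shows "\<exists>k\<in>carrier K. fst c k = compl Y r"
proof -
  interpret Y: OM Y by (rule OM.intro[OF Y])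
  have K: "is_oml K" using ker unfolding is_kernel_def by blast
  interpret K: OM K by (rule OM.intro[OF K])
  obtain u where u: "is_mor (downset Y r) K u" "mor_eq (downset Y r) Y (comp K c u) (downmor Y r)"
    using ker Y.downset_oml[OF r] downmor_mor[OF Y r] z unfolding is_kernel_def by blast
  have rin: "r \<in> carrier (downset Y r)" using r by (simp add: Y.om_refl)
  have "fst c (compl K (fst u r)) = compl Y r"
    using u(2) rin unfolding mor_eq_def comp_def downmor_def by simp
  moreover have "compl K (fst u r) \<in> carrier K" using mor_fst[OF u(1) rin] K.cc by blast
  ultimately show ?thesis by blast
qed

theorem mainTheorem6:
  fixes X :: "'a oml" and Y :: "'b oml" and f :: "('a, 'b) mor" and a :: 'a and b :: 'b
  assumes "is_oml X" and "is_oml Y" and "is_mor X Y f"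
    and "a \<in> carrier X" and "b \<in> carrier Y"
  shows "(\<forall>(K :: 'k oml) c.
            is_kernel TYPE('b) K Y (downset Y b) c (dagger (downmor Y b)) \<longrightarrow>
            is_kernel TYPE('z) (downset X (snd f (compl Y b))) X K
              (downmor X (snd f (compl Y b))) (comp Y (dagger c) f))
       \<and> (\<forall>(L :: 'l oml) c.
            is_kernel TYPE('b) L Y (downset X a) c (dagger (comp X f (downmor X a))) \<longrightarrow>
            is_kernel TYPE('z) (downset Y (compl Y (fst f a))) Y L
              (downmor Y (compl Y (fst f a))) (dagger c))"
proof -
  note X = assms(1) and Y = assms(2) and f = assms(3) and a = assms(4) and b = assms(5)
  interpret X: OM X by (rule OM.intro[OF X])
  interpret Y: OM Y by (rule OM.intro[OF Y])
  have P1: "is_kernel TYPE('z) (downset X (snd f (compl Y b))) X K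
              (downmor X (snd f (compl Y b))) (comp Y (dagger c) f)"
    if ker: "is_kernel TYPE('b) K Y (downset Y b) c (dagger (downmor Y b))" for K :: "'k oml" and c
  proof -
    have K: "is_oml K" and c: "is_mor K Y c" using ker unfolding is_kernel_def by blast+
    have ec: "mor_eq K (downset Y b) (comp Y (dagger (downmor Y b)) c) (zero_mor K (downset Y b))"
      using ker unfolding is_kernel_def by blast
    have lb: "le Y b (fst c k)" if k: "k \<in> carrier K" for k
    proof -
      have "meet Y b (compl Y (compl Y (fst c k))) = b"
        using ec k b unfolding mor_eq_def comp_def dagger_def downmor_def by (simp add: Y.down_top)
      then show ?thesis using k b mor_fst[OF c k] by (metis Y.ccompl Y.meet_le2)
    qed
    have cb: "compl Y b \<in> carrier Y" using b Y.cc by blast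
    have "\<exists>k\<in>carrier K. fst c k = compl Y (compl Y b)"
    proof (rule exists_k[OF ker Y cb])
      show "mor_eq (downset Y (compl Y b)) (downset Y b) (comp Y (dagger (downmor Y b)) (downmor Y (compl Y b)))
          (zero_mor (downset Y (compl Y b)) (downset Y b))"
        unfolding mor_eq_def comp_def dagger_def downmor_def using b cb
        apply (simp add: Y.down_top Y.ccompl Y.cc)
        apply (intro conjI ballI)
        apply (metis Y.cc Y.compl_swap Y.meet_absorb1 mem_Collect_eq)
        by (metis Y.cc Y.ccompl Y.compl_swap Y.meet_absorb1 mem_Collect_eq)
    qed
    then obtain k0 where k0: "k0 \<in> carrier K" "fst c k0 = b" using b Y.ccompl by auto
    have kc: "snd c y = top K \<longleftrightarrow> le Y y b" if y: "y \<in> carrier Y" for y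
      using top_char[OF K c y] lb k0 y b mor_fst[OF c] by (metis Y.om_trans)
    show ?thesis
    proof (rule kernel_downmor[OF X K])
      show "is_mor X K (comp Y (dagger c) f)" by (rule is_mor_comp[OF Y f is_mor_dagger[OF c]])
      show "snd f (compl Y b) \<in> carrier X" using mor_snd[OF f cb] .
      fix x assume x: "x \<in> carrier X"
      have fx: "fst f x \<in> carrier Y" using mor_fst[OF f x] .
      have "fst (comp Y (dagger c) f) x = snd c (compl Y (fst f x))"
        by (simp add: comp_def dagger_def)
      also have "\<dots> = top K \<longleftrightarrow> le Y (compl Y (fst f x)) b" using kc fx Y.cc by blast
      also have "\<dots> \<longleftrightarrow> le Y (compl Y b) (fst f x)" using fx b by (meson Y.cc Y.compl_swap2)
      also have "\<dots> \<longleftrightarrow> le X x (snd f (compl Y b))" using mor_gal[OF f x cb] .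
      finally show "fst (comp Y (dagger c) f) x = top K \<longleftrightarrow> le X x (snd f (compl Y b))" .
    qed
  qed
  have P2: "is_kernel TYPE('z) (downset Y (compl Y (fst f a))) Y L
              (downmor Y (compl Y (fst f a))) (dagger c)"
    if ker: "is_kernel TYPE('b) L Y (downset X a) c (dagger (comp X f (downmor X a)))" for L :: "'l oml" and c
  proof -
    have L: "is_oml L" and c: "is_mor L Y c" using ker unfolding is_kernel_def by blast+
    have ec: "mor_eq L (downset X a) (comp Y (dagger (comp X f (downmor X a))) c) (zero_mor L (downset X a))"
      using ker unfolding is_kernel_def by blast
    have fa: "fst f a \<in> carrier Y" using mor_fst[OF f a] .
    have q: "compl Y (fst f a) \<in> carrier Y" using fa Y.cc by blast
    have lb: "le Y (compl Y (fst f a)) (fst c l)" if l: "l \<in> carrier L" for l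
    proof -
      have cl: "fst c l \<in> carrier Y" using mor_fst[OF c l] .
      have "meet X a (compl X (compl X (snd f (compl Y (fst c l))))) = a"
        using ec l a unfolding mor_eq_def comp_def dagger_def downmor_def by (simp add: X.down_top)
      then have "meet X a (snd f (compl Y (fst c l))) = a" using mor_snd[OF f] cl Y.cc X.ccompl by metis
      then have "le X a (snd f (compl Y (fst c l)))" using a cl mor_snd[OF f] Y.cc
        by (metis X.meet_le2)
      then have "le Y (compl Y (fst c l)) (fst f a)" using mor_gal[OF f a] cl Y.cc by blast
      then show ?thesis using cl fa by (meson Y.compl_swap2)
    qed
    have "\<exists>k\<in>carrier L. fst c k = compl Y (fst f a)"
    proof (rule exists_k[OF ker Y fa])
      have A: "meet X a (snd f z) = a" if z: "z \<in> carrier Y" "le Y z (fst f a)" for z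
        using z a mor_gal[OF f a z(1)] mor_snd[OF f z(1)] X.meet_absorb1 by blast
      have B: "meet Y (fst f a) (fst f v) = fst f a" if v: "v \<in> carrier X" "le X v a" for v
        using v a mor_fst_anti[OF f] mor_fst[OF f] Y.meet_absorb1 by blast
      show "mor_eq (downset Y (fst f a)) (downset X a) (comp Y (dagger (comp X f (downmor X a))) (downmor Y (fst f a)))
          (zero_mor (downset Y (fst f a)) (downset X a))"
        unfolding mor_eq_def comp_def dagger_def downmor_def using a fa
        by (simp add: Y.down_top X.down_top Y.ccompl X.ccompl mor_snd[OF f] mor_fst[OF f] A B)
    qed
    then obtain k0 where k0: "k0 \<in> carrier L" "fst c k0 = compl Y (fst f a)" by auto
    show ?thesis
    proof (rule kernel_downmor[OF Y L is_mor_dagger[OF c] q])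
      fix y assume y: "y \<in> carrier Y"
      have "fst (dagger c) y = snd c y" by (simp add: dagger_def)
      also have "\<dots> = top L \<longleftrightarrow> le Y y (compl Y (fst f a))"
        using top_char[OF L c y] lb k0 y q mor_fst[OF c] by (metis Y.om_trans)
      finally show "fst (dagger c) y = top L \<longleftrightarrow> le Y y (compl Y (fst f a))" .
    qed
  qed
  show ?thesis using P1 P2 by blast
qed

end
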